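(* Let $f$ be smooth and of bistable type: there is $\alpha\in(0,1)$ with $f(0)=f(\alpha)=f(1)=0$, $f'(0)<0$, $f'(1)<0$, $f'(\alpha)>0$, $f>0$ on $(-\infty,0)\cup(\alpha,1)$ and $f<0$ on $(0,\alpha)\cup(1,+\infty)$. Let $\tau\in[0,\tau_m)$ with $\tau_m:=1/\sup_{u\in[0,1]}|f'(u)|$. Suppose $c\in\mathbb{R}$ and $(U,V)$ is a solution of $$cU_\xi+V_\xi+f(U)=0,\qquad U_\xi+c\tau V_\xi-V=0,\qquad \xi\in\mathbb{R},$$ satisfying $(U,V)(-\infty)=(0,0)$ and $(U,V)(+\infty)=(1,0)$. Then (i) $c$ has the same sign as $-\int_0^1 f(u)\,du$; (ii) $c^2\tau<1$. *)

theory Defs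
  imports "HOL-Analysis.Analysis"
begin

definition smooth_fun :: "(real \<Rightarrow> real) \<Rightarrow> bool" where
  "smooth_fun f \<longleftrightarrow> (\<exists>D. D 0 = f \<and> (\<forall>n x. (D n has_real_derivative D (Suc n) x) (at x)))"

definition bistable :: "(real \<Rightarrow> real) \<Rightarrow> real \<Rightarrow> bool" where
  "bistable f \<alpha> \<longleftrightarrow> 0 < \<alpha> \<and> \<alpha> < 1 \<and>
     f 0 = 0 \<and> f \<alpha> = 0 \<and> f 1 = 0 \<and>
     deriv f 0 < 0 \<and> deriv f 1 < 0 \<and> deriv f \<alpha> > 0 \<and>
     (\<forall>u. (u < 0 \<or> (\<alpha> < u \<and> u < 1)) \<longrightarrow> f u > 0) \<and>
     (\<forall>u. ((0 < u \<and> u < \<alpha>) \<or> 1 < u) \<longrightarrow> f u < 0)"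

definition tau_m :: "(real \<Rightarrow> real) \<Rightarrow> real" where
  "tau_m f = 1 / Sup ((\<lambda>u. \<bar>deriv f u\<bar>) ` {0..1})"

end

theory Submission
  imports Defs
begin

lemma tail_top:
  fixes U :: "real \<Rightarrow> real"
  assumes cont: "\<And>x. isCont U x" and dpos: "\<delta> > 0"
    and lim: "(U \<longlongrightarrow> a) at_top" and far: "\<bar>U t0 - a\<bar> \<ge> \<delta>"
    and key: "\<And>t. (\<forall>u\<ge>t. \<bar>U u - a\<bar> < \<delta>) \<Longrightarrow> (\<forall>u\<ge>t. U u = a)"
  shows False
proof -
  define T where "T = {t. \<forall>u\<ge>t. \<bar>U u - a\<bar> < \<delta>}"
  have "eventually (\<lambda>x. dist (U x) a < \<delta>) at_top"
    using lim dpos by (auto simp: tendsto_iff)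
  then obtain t1 where t1: "\<forall>u\<ge>t1. \<bar>U u - a\<bar> < \<delta>"
    by (auto simp: eventually_at_top_linorder dist_real_def)
  hence t1T: "t1 \<in> T" by (simp add: T_def)
  have lb: "\<And>t. t \<in> T \<Longrightarrow> t0 < t" using far unfolding T_def
    by (metis linorder_not_less mem_Collect_eq not_le)
  have bdd: "bdd_below T" using lb by (meson bdd_below.I less_imp_le)
  define s where "s = Inf T"
  have right: "U u = a" if us: "u > s" for u
  proof -
    obtain t where t: "t \<in> T" "t < u" using cInf_less_iff[of T u] bdd t1T s_def us by auto
    from t(1) have "\<forall>u\<ge>t. \<bar>U u - a\<bar> < \<delta>" by (simp add: T_def)
    from key[OF this] t(2) show "U u = a" by simp
  qed
  from cont[of s] have "U \<midarrow>s\<rightarrow> U s" by (simp add: isCont_def)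
  then obtain e where e: "e > 0" "\<forall>y. y \<noteq> s \<and> norm (y - s) < e \<longrightarrow> norm (U y - U s) < \<delta>/2"
    using dpos unfolding LIM_eq by (meson half_gt_zero)
  have "U (s + e/2) = a" using right e by auto
  moreover have "\<bar>U (s + e/2) - U s\<bar> < \<delta>/2" using e by auto
  ultimately have Us: "\<bar>U s - a\<bar> < \<delta>/2" by (simp add: abs_minus_commute)
  have "s - e/2 \<in> T" unfolding T_def
  proof (intro CollectI allI impI)
    fix u assume u: "u \<ge> s - e/2"
    show "\<bar>U u - a\<bar> < \<delta>"
    proof (cases "u > s")
      case True thus ?thesis using right dpos by auto
    next
      case False
      hence "u = s \<or> (u \<noteq> s \<and> norm (u - s) < e)" using u e by auto
      thus ?thesis
      proof
        assume "u = s" thus ?thesis using Us dpos by simp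
      next
        assume h: "u \<noteq> s \<and> norm (u - s) < e"
        hence "\<bar>U u - U s\<bar> < \<delta>/2" using e(2) by simp
        thus ?thesis using Us by arith
      qed
    qed
  qed
  hence "s \<le> s - e/2" unfolding s_def using bdd by (rule cInf_lower)
  thus False using e by auto
qed

lemma tail_bot:
  fixes U :: "real \<Rightarrow> real"
  assumes cont: "\<And>x. isCont U x" and dpos: "\<delta> > 0"
    and lim: "(U \<longlongrightarrow> a) at_bot" and far: "\<bar>U t0 - a\<bar> \<ge> \<delta>"
    and key: "\<And>t. (\<forall>u\<le>t. \<bar>U u - a\<bar> < \<delta>) \<Longrightarrow> (\<forall>u\<le>t. U u = a)"
  shows False
proof -
  define T where "T = {t. \<forall>u\<le>t. \<bar>U u - a\<bar> < \<delta>}"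
  have "eventually (\<lambda>x. dist (U x) a < \<delta>) at_bot"
    using lim dpos by (auto simp: tendsto_iff)
  then obtain t1 where t1: "\<forall>u\<le>t1. \<bar>U u - a\<bar> < \<delta>"
    by (auto simp: eventually_at_bot_linorder dist_real_def)
  hence t1T: "t1 \<in> T" by (simp add: T_def)
  have ub: "\<And>t. t \<in> T \<Longrightarrow> t < t0" using far unfolding T_def
    by (metis linorder_not_less mem_Collect_eq not_le)
  have bdd: "bdd_above T" using ub by (meson bdd_above.I less_imp_le)
  define s where "s = Sup T"
  have left: "U u = a" if us: "u < s" for u
  proof -
    obtain t where t: "t \<in> T" "u < t" using less_cSup_iff[of T u] bdd t1T s_def us by auto
    from t(1) have "\<forall>u\<le>t. \<bar>U u - a\<bar> < \<delta>" by (simp add: T_def)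
    from key[OF this] t(2) show "U u = a" by simp
  qed
  from cont[of s] have "U \<midarrow>s\<rightarrow> U s" by (simp add: isCont_def)
  then obtain e where e: "e > 0" "\<forall>y. y \<noteq> s \<and> norm (y - s) < e \<longrightarrow> norm (U y - U s) < \<delta>/2"
    using dpos unfolding LIM_eq by (meson half_gt_zero)
  have "U (s - e/2) = a" using left e by auto
  moreover have "\<bar>U (s - e/2) - U s\<bar> < \<delta>/2" using e by auto
  ultimately have Us: "\<bar>U s - a\<bar> < \<delta>/2" by (simp add: abs_minus_commute)
  have "s + e/2 \<in> T" unfolding T_def
  proof (intro CollectI allI impI)
    fix u assume u: "u \<le> s + e/2"
    show "\<bar>U u - a\<bar> < \<delta>"
    proof (cases "u < s")
      case True thus ?thesis using left dpos by auto
    next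
      case False
      hence "u = s \<or> (u \<noteq> s \<and> norm (u - s) < e)" using u e by auto
      thus ?thesis
      proof
        assume "u = s" thus ?thesis using Us dpos by simp
      next
        assume h: "u \<noteq> s \<and> norm (u - s) < e"
        hence "\<bar>U u - U s\<bar> < \<delta>/2" using e(2) by simp
        thus ?thesis using Us by arith
      qed
    qed
  qed
  hence "s + e/2 \<le> s" unfolding s_def using bdd by (rule cSup_upper)
  thus False using e by auto
qed

lemma attains_min:
  fixes U :: "real \<Rightarrow> real"
  assumes cont: "\<And>x. isCont U x"
    and la: "(U \<longlongrightarrow> a) at_bot" and lb: "(U \<longlongrightarrow> b) at_top"
    and "U t0 < a" "U t0 < b"
  shows "\<exists>m. \<forall>x. U m \<le> U x"
proof -
  have "eventually (\<lambda>x. U t0 < U x) at_bot" using la assms(4) by (rule order_tendstoD)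
  then obtain A where A: "\<forall>x\<le>A. U t0 < U x" by (auto simp: eventually_at_bot_linorder)
  have "eventually (\<lambda>x. U t0 < U x) at_top" using lb assms(5) by (rule order_tendstoD)
  then obtain B where B: "\<forall>x\<ge>B. U t0 < U x" by (auto simp: eventually_at_top_linorder)
  have "\<exists>m\<in>{min A t0..max B t0}. \<forall>y\<in>{min A t0..max B t0}. U m \<le> U y"
    by (rule continuous_attains_inf) (auto intro: continuous_at_imp_continuous_on cont)
  then obtain m where m: "m \<in> {min A t0..max B t0}" "\<forall>y\<in>{min A t0..max B t0}. U m \<le> U y" by blast
  have "U m \<le> U t0" using m by auto
  have "U m \<le> U x" for x
  proof (cases "x \<in> {min A t0..max B t0}")
    case True thus ?thesis using m by auto
  next
    case False
    hence "x \<le> A \<or> x \<ge> B" by auto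
    thus ?thesis using A B \<open>U m \<le> U t0\<close> by force
  qed
  thus ?thesis by blast
qed



lemma cont_pos_nbhd:
  fixes g :: "real \<Rightarrow> real"
  assumes "isCont g x" "g x > 0"
  shows "\<exists>d>0. \<forall>y. \<bar>y - x\<bar> < d \<longrightarrow> g y > 0"
proof -
  from assms(1) have "g \<midarrow>x\<rightarrow> g x" by (simp add: isCont_def)
  then obtain d where d: "d>0" "\<forall>y. y \<noteq> x \<and> norm (y - x) < d \<longrightarrow> norm (g y - g x) < g x"
    using assms(2) unfolding LIM_eq by blast
  show ?thesis
  proof (intro exI[of _ d] conjI allI impI)
    fix y assume y: "\<bar>y - x\<bar> < d"
    show "g y > 0"
    proof (cases "y = x")
      case True thus ?thesis using assms(2) by simp
    next
      case False
      hence "\<bar>g y - g x\<bar> < g x" using d y by auto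
      thus ?thesis by arith
    qed
  qed (use d in auto)
qed

theorem proposition2p1:
  fixes f U V :: "real \<Rightarrow> real" and c \<tau> \<alpha> :: real
  assumes "smooth_fun f"
    and "bistable f \<alpha>"
    and "0 \<le> \<tau>" and "\<tau> < tau_m f"
    and "\<forall>\<xi>. U differentiable (at \<xi>)" and "\<forall>\<xi>. V differentiable (at \<xi>)"
    and "\<forall>\<xi>. c * deriv U \<xi> + deriv V \<xi> + f (U \<xi>) = 0"
    and "\<forall>\<xi>. deriv U \<xi> + c * \<tau> * deriv V \<xi> - V \<xi> = 0"
    and "(U \<longlongrightarrow> 0) at_bot" and "(V \<longlongrightarrow> 0) at_bot"
    and "(U \<longlongrightarrow> 1) at_top" and "(V \<longlongrightarrow> 0) at_top"
  shows "sgn c = sgn (- integral {0..1} f) \<and> c\<^sup>2 * \<tau> < 1"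
proof -
  note sm = assms(1) and bs = assms(2) and tau0 = assms(3) and taum = assms(4)
    and Ud = assms(5) and Vd = assms(6) and e1 = assms(7) and e2 = assms(8)
    and U0 = assms(9) and V0 = assms(10) and U1 = assms(11) and V1 = assms(12)
  obtain Dd where Dd0: "Dd 0 = f" and Dd: "\<forall>n x. (Dd n has_real_derivative Dd (Suc n) x) (at x)"
    using sm unfolding smooth_fun_def by blast
  define f' where "f' = Dd 1"
  have fder: "(f has_real_derivative f' x) (at x)" for x
    using Dd Dd0 unfolding f'_def by (metis One_nat_def)
  have f'der: "(f' has_real_derivative Dd 2 x) (at x)" for x
    using Dd unfolding f'_def by (metis One_nat_def Suc_1)
  have df: "deriv f = f'" using fder by (intro ext DERIV_imp_deriv)
  have fc: "isCont f x" for x using fder by (rule DERIV_isCont)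
  have f'c: "isCont f' x" for x using f'der by (rule DERIV_isCont)
  from bs have a0: "0 < \<alpha>" and a1: "\<alpha> < 1" and f0: "f 0 = 0" and f1: "f 1 = 0"
    and d0: "f' 0 < 0" and d1: "f' 1 < 0"
    and fpos: "\<And>u. u < 0 \<or> (\<alpha> < u \<and> u < 1) \<Longrightarrow> f u > 0"
    and fneg: "\<And>u. (0 < u \<and> u < \<alpha>) \<or> 1 < u \<Longrightarrow> f u < 0"
    unfolding bistable_def df by auto
  define S where "S = Sup ((\<lambda>u. \<bar>f' u\<bar>) ` {0..1})"
  have bdd: "bdd_above ((\<lambda>u. \<bar>f' u\<bar>) ` {0..1})"
  proof -
    have "continuous_on {0..1} (\<lambda>u. \<bar>f' u\<bar>)"
      using f'c by (intro continuous_at_imp_continuous_on) (auto intro: continuous_intros)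
    hence "compact ((\<lambda>u. \<bar>f' u\<bar>) ` {0..1})" by (rule compact_continuous_image[OF _ compact_Icc])
    thus ?thesis by (intro bounded_imp_bdd_above compact_imp_bounded)
  qed
  have Sge: "\<bar>f' u\<bar> \<le> S" if "u \<in> {0..1}" for u unfolding S_def using bdd that by (intro cSup_upper) auto
  have Spos: "S > 0" using Sge[of 0] d0 by auto
  have "\<tau> < 1 / S" using taum unfolding tau_m_def df S_def .
  hence tS: "\<tau> * S < 1" using Spos by (simp add: field_simps)
  define g where "g u = 1 - \<tau> * f' u" for u
  have gpos: "g u > 0" if "0 \<le> u" "u \<le> 1" for u
  proof -
    have "\<tau> * f' u \<le> \<tau> * \<bar>f' u\<bar>" using tau0 by (intro mult_left_mono) auto
    also have "\<dots> \<le> \<tau> * S" using tau0 Sge that by (intro mult_left_mono) auto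
    finally show ?thesis using tS unfolding g_def by linarith
  qed
  have gc: "isCont g x" for x unfolding g_def using f'c by (auto intro: continuous_intros)
  obtain \<delta>0 where \<delta>0: "\<delta>0 > 0" "\<And>y. \<bar>y - 0\<bar> < \<delta>0 \<Longrightarrow> g y > 0"
    using cont_pos_nbhd[OF gc gpos[of 0]] by auto
  obtain \<delta>1 where \<delta>1: "\<delta>1 > 0" "\<And>y. \<bar>y - 1\<bar> < \<delta>1 \<Longrightarrow> g y > 0"
    using cont_pos_nbhd[OF gc gpos[of 1]] by auto
  define \<delta> where "\<delta> = min (min \<delta>0 \<delta>1) (min (\<alpha>/2) (min ((1-\<alpha>)/2) (1/2)))"
  have \<delta>pos: "\<delta> > 0" using \<delta>0 \<delta>1 a0 a1 by (simp add: \<delta>_def)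
  have \<delta>le: "\<delta> \<le> \<delta>0" "\<delta> \<le> \<delta>1" "\<delta> \<le> \<alpha>/2" "\<delta> \<le> (1-\<alpha>)/2" "\<delta> \<le> 1/2"
    unfolding \<delta>_def by (meson min.cobounded1 min.cobounded2 order_trans)+
  define W where "W = deriv U"
  have Uder: "(U has_real_derivative W x) (at x)" for x
    using Ud unfolding W_def by (simp add: DERIV_deriv_iff_real_differentiable)
  have Vder: "(V has_real_derivative deriv V x) (at x)" for x
    using Vd by (simp add: DERIV_deriv_iff_real_differentiable)
  have Uc: "isCont U x" for x using Uder by (rule DERIV_isCont)
  have Vc: "isCont V x" for x using Vder by (rule DERIV_isCont)
  define Dc where "Dc = 1 - c\<^sup>2 * \<tau>"
  have dV: "deriv V x = - f (U x) - c * W x" for x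
    using e1[rule_format, of x] unfolding W_def by linarith
  have Vid: "V x = Dc * W x - c * \<tau> * f (U x)" for x
  proof -
    have "V x = W x + c * \<tau> * deriv V x" using e2[rule_format, of x] unfolding W_def by linarith
    thus ?thesis unfolding dV Dc_def by (simp add: algebra_simps power2_eq_square)
  qed
  obtain B where B: "\<And>x. \<bar>U x\<bar> \<le> B" "B \<ge> 0"
  proof -
    have "eventually (\<lambda>x. dist (U x) 0 < 1) at_bot" using U0 by (auto simp: tendsto_iff)
    then obtain A where A: "\<forall>x\<le>A. \<bar>U x\<bar> < 1" by (auto simp: eventually_at_bot_linorder)
    have "eventually (\<lambda>x. dist (U x) 1 < 1) at_top" using U1 by (auto simp: tendsto_iff)
    then obtain Bt where Bt: "\<forall>x\<ge>Bt. \<bar>U x - 1\<bar> < 1" by (auto simp: eventually_at_top_linorder dist_real_def)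
    have "bounded (U ` {A..Bt})"
      by (intro compact_imp_bounded compact_continuous_image continuous_at_imp_continuous_on)
         (auto simp: Uc)
    then obtain a where a: "\<forall>y\<in>U ` {A..Bt}. \<bar>y\<bar> \<le> a" by (auto simp: bounded_real)
    have "\<bar>U x\<bar> \<le> max a 2" for x
    proof -
      consider "x \<le> A" | "x \<ge> Bt" | "x \<in> {A..Bt}" by (meson atLeastAtMost_iff linorder_le_cases)
      thus ?thesis
      proof cases
        case 1 thus ?thesis using A by (meson less_imp_le max.coboundedI2 one_le_numeral order_trans)
      next
        case 2 hence "\<bar>U x - 1\<bar> < 1" using Bt by blast
        thus ?thesis by linarith
      next
        case 3 hence "\<bar>U x\<bar> \<le> a" using a by blast
        thus ?thesis by linarith
      qed
    qed
    thus ?thesis using that[of "max a 2"] by auto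
  qed
  define R where "R = B + 3"
  have UR: "\<bar>U x\<bar> < R" for x using B(1)[of x] unfolding R_def by linarith
  have R3: "R \<ge> 3" using B by (simp add: R_def)
  define F where "F x = integral {-R..x} f" for x
  have Fder: "(F has_real_derivative f y) (at y)" if "\<bar>y\<bar> < R" for y
  proof -
    have "continuous_on {-R..R} f" using fc by (intro continuous_at_imp_continuous_on) auto
    hence "(F has_real_derivative f y) (at y within {-R..R})"
      using that unfolding F_def by (intro integral_has_real_derivative) auto
    moreover have "at y within {-R..R} = at y" using that by (intro at_within_interior) auto
    ultimately show ?thesis by simp
  qed
  have intF: "integral {0..1} f = F 1 - F 0"
  proof -
    have "(f has_integral F 1 - F 0) {0..1}"
    proof (rule fundamental_theorem_of_calculus)
      fix x :: real assume "x \<in> {0..1}"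
      hence "(F has_real_derivative f x) (at x)" using R3 by (intro Fder) auto
      thus "(F has_vector_derivative f x) (at x within {0..1})"
        unfolding has_real_derivative_iff_has_vector_derivative
        by (rule has_vector_derivative_at_within)
    qed simp
    thus ?thesis by (rule integral_unique)
  qed
  have FderI: "(F has_real_derivative f y) (at y)" if "\<bar>y\<bar> \<le> 2" for y
    using that R3 by (intro Fder) linarith
  have F0: "F u < F 0" if u: "\<bar>u\<bar> < \<delta>" "u \<noteq> 0" for u
  proof (cases "u < 0")
    case True
    have "\<exists>z. u < z \<and> z < 0 \<and> F 0 - F u = (0 - u) * f z"
    proof (rule MVT2)
      fix x assume "u \<le> x" "x \<le> 0"
      thus "(F has_real_derivative f x) (at x)" using u \<delta>le a0 a1 by (intro FderI) linarith
    qed (use True in linarith)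
    then obtain z where z: "u < z" "z < 0" "F 0 - F u = (0 - u) * f z" by blast
    have "f z > 0" using fpos z by auto
    hence "F 0 - F u > 0" using z True by (simp add: mult_neg_pos mult_pos_pos)
    thus ?thesis by simp
  next
    case False
    hence up: "u > 0" using u by simp
    have "\<exists>z. 0 < z \<and> z < u \<and> F u - F 0 = (u - 0) * f z"
    proof (rule MVT2)
      fix x assume "0 \<le> x" "x \<le> u"
      thus "(F has_real_derivative f x) (at x)" using u \<delta>le a0 a1 by (intro FderI) linarith
    qed (use up in linarith)
    then obtain z where z: "0 < z" "z < u" "F u - F 0 = (u - 0) * f z" by blast
    have "f z < 0" using fneg z u \<delta>le by auto
    hence "F u - F 0 < 0" using z up by (simp add: mult_pos_neg)
    thus ?thesis by simp
  qed
  have F1: "F u < F 1" if u: "\<bar>u - 1\<bar> < \<delta>" "u \<noteq> 1" for u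
  proof (cases "u < 1")
    case True
    have "\<exists>z. u < z \<and> z < 1 \<and> F 1 - F u = (1 - u) * f z"
    proof (rule MVT2)
      fix x assume "u \<le> x" "x \<le> 1"
      thus "(F has_real_derivative f x) (at x)" using u \<delta>le a0 a1 by (intro FderI) linarith
    qed (use True in linarith)
    then obtain z where z: "u < z" "z < 1" "F 1 - F u = (1 - u) * f z" by blast
    have "f z > 0" using fpos z u \<delta>le by auto
    hence "F 1 - F u > 0" using z True by (simp add: mult_neg_pos mult_pos_pos)
    thus ?thesis by simp
  next
    case False
    hence up: "u > 1" using u by simp
    have "\<exists>z. 1 < z \<and> z < u \<and> F u - F 1 = (u - 1) * f z"
    proof (rule MVT2)
      fix x assume "1 \<le> x" "x \<le> u"
      thus "(F has_real_derivative f x) (at x)" using u \<delta>le a0 a1 by (intro FderI) linarith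
    qed (use up in linarith)
    then obtain z where z: "1 < z" "z < u" "F u - F 1 = (u - 1) * f z" by blast
    have "f z < 0" using fneg z by auto
    hence "F u - F 1 < 0" using z up by (simp add: mult_pos_neg)
    thus ?thesis by simp
  qed
  have fU: "((\<lambda>x. f (U x)) has_real_derivative f' (U x) * W x) (at x)" for x
    by (rule DERIV_chain2[OF fder Uder])
  have FU: "((\<lambda>x. F (U x)) has_real_derivative f (U x) * W x) (at x)" for x
    by (rule DERIV_chain2[OF Fder[OF UR] Uder])
  have Wder: "(W has_real_derivative (- f (U x) - c * g (U x) * W x) / Dc) (at x)"
    if Dn: "Dc \<noteq> 0" for x
  proof -
    have Weq: "W = (\<lambda>x. (V x + c * \<tau> * f (U x)) / Dc)"
      using Vid Dn by (intro ext) (simp add: field_simps)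
    have "((\<lambda>x. (V x + c * \<tau> * f (U x)) / Dc) has_real_derivative
           (deriv V x + c * \<tau> * (f' (U x) * W x)) / Dc) (at x)"
      by (intro DERIV_cdivide DERIV_add DERIV_cmult Vder fU)
    hence "(W has_real_derivative (deriv V x + c * \<tau> * (f' (U x) * W x)) / Dc) (at x)"
      using Weq by simp
    moreover have "deriv V x + c * \<tau> * (f' (U x) * W x) = - f (U x) - c * g (U x) * W x"
      unfolding dV g_def by (simp add: algebra_simps)
    ultimately show ?thesis by simp
  qed
  define E where "E x = Dc / 2 * (W x * W x) + F (U x)" for x
  have Eder: "(E has_real_derivative - c * g (U x) * (W x * W x)) (at x)" for x
  proof (cases "Dc = 0")
    case True
    have Veq: "V = (\<lambda>x. - (c * \<tau>) * f (U x))" using Vid True by (intro ext) simp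
    have "(V has_real_derivative - (c * \<tau>) * (f' (U x) * W x)) (at x)"
      unfolding Veq by (intro DERIV_cmult fU)
    hence "deriv V x = - (c * \<tau>) * (f' (U x) * W x)" by (rule DERIV_imp_deriv)
    hence fUW: "f (U x) = - c * g (U x) * W x" using dV[of x] unfolding g_def
      by (simp add: algebra_simps)
    have "E = (\<lambda>x. F (U x))" using True by (intro ext) (simp add: E_def)
    hence "(E has_real_derivative f (U x) * W x) (at x)" using FU by simp
    thus ?thesis using fUW by (simp add: mult.assoc)
  next
    case False
    have "(E has_real_derivative Dc / 2 * (((- f (U x) - c * g (U x) * W x) / Dc) * W x
           + ((- f (U x) - c * g (U x) * W x) / Dc) * W x) + f (U x) * W x) (at x)"
      unfolding E_def by (intro DERIV_add DERIV_cmult DERIV_mult Wder[OF False] FU)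
    moreover have "Dc / 2 * (((- f (U x) - c * g (U x) * W x) / Dc) * W x
           + ((- f (U x) - c * g (U x) * W x) / Dc) * W x) + f (U x) * W x
         = - c * g (U x) * (W x * W x)"
      using False by (simp add: field_simps)
    ultimately show ?thesis by simp
  qed
  have Wlim: "((\<lambda>x. Dc / 2 * (W x * W x)) \<longlongrightarrow> 0) F'"
    if VF: "(V \<longlongrightarrow> 0) F'" and UF: "(U \<longlongrightarrow> l) F'" and fl: "f l = 0" for F' l
  proof (cases "Dc = 0")
    case True thus ?thesis by simp
  next
    case False
    have Weq: "W = (\<lambda>x. (V x + c * \<tau> * f (U x)) / Dc)"
      using Vid False by (intro ext) (simp add: field_simps)
    have "((\<lambda>x. f (U x)) \<longlongrightarrow> f l) F'" using isCont_tendsto_compose[OF fc UF] .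
    hence "(W \<longlongrightarrow> (0 + c * \<tau> * f l) / Dc) F'" unfolding Weq
      using \<open>Dc \<noteq> 0\<close> by (intro tendsto_intros VF) auto
    hence "(W \<longlongrightarrow> 0) F'" using fl by simp
    hence "((\<lambda>x. Dc / 2 * (W x * W x)) \<longlongrightarrow> Dc / 2 * (0 * 0)) F'" by (intro tendsto_intros)
    thus ?thesis by simp
  qed
  have Fc: "isCont F y" if "\<bar>y\<bar> \<le> 2" for y using FderI[OF that] by (rule DERIV_isCont)
  have Ebot: "(E \<longlongrightarrow> F 0) at_bot"
  proof -
    have "((\<lambda>x. F (U x)) \<longlongrightarrow> F 0) at_bot" by (rule isCont_tendsto_compose[OF Fc U0]) simp
    hence "((\<lambda>x. Dc / 2 * (W x * W x) + F (U x)) \<longlongrightarrow> 0 + F 0) at_bot"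
      by (intro tendsto_intros Wlim[OF V0 U0 f0])
    thus ?thesis by (simp add: E_def[abs_def])
  qed
  have Etop: "(E \<longlongrightarrow> F 1) at_top"
  proof -
    have "((\<lambda>x. F (U x)) \<longlongrightarrow> F 1) at_top" by (rule isCont_tendsto_compose[OF Fc U1]) simp
    hence "((\<lambda>x. Dc / 2 * (W x * W x) + F (U x)) \<longlongrightarrow> 0 + F 1) at_top"
      by (intro tendsto_intros Wlim[OF V1 U1 f1])
    thus ?thesis by (simp add: E_def[abs_def])
  qed
  have Dpos: "Dc > 0"
  proof (rule ccontr)
    assume "\<not> Dc > 0" hence Dle: "Dc \<le> 0" by simp
    have cne: "c \<noteq> 0" using Dle tau0 unfolding Dc_def by auto
    have Ele: "E x \<le> F (U x)" for x
    proof -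
      have "Dc / 2 * (W x * W x) \<le> 0" using Dle by (intro mult_nonpos_nonneg) auto
      thus ?thesis unfolding E_def by simp
    qed
    show False
    proof (cases "c > 0")
      case True
      have "eventually (\<lambda>x. dist (U x) 0 < 1/2) at_bot" using tendstoD[OF U0, of "1/2"] by simp
      then obtain N where N: "\<forall>x\<le>N. \<bar>U x\<bar> < 1/2" by (auto simp: eventually_at_bot_linorder)
      have "\<bar>U N\<bar> < 1/2" using N by simp
      hence far: "\<bar>U N - 1\<bar> \<ge> \<delta>" using \<delta>le by arith
      show False
      proof (rule tail_top[OF Uc \<delta>pos U1 far])
        fix t assume H: "\<forall>u\<ge>t. \<bar>U u - 1\<bar> < \<delta>"
        show "\<forall>u\<ge>t. U u = 1"
        proof (intro allI impI)
          fix u assume ut: "t \<le> u"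
          have mono: "E v \<le> E u" if uv: "u \<le> v" for v
          proof (rule DERIV_nonpos_imp_nonincreasing[OF uv])
            fix x assume "u \<le> x" "x \<le> v"
            hence "\<bar>U x - 1\<bar> < \<delta>" using H ut by simp
            hence "\<bar>U x - 1\<bar> < \<delta>1" using \<delta>le by linarith
            hence gp: "g (U x) > 0" by (rule \<delta>1(2))
            have "0 \<le> c * g (U x) * (W x * W x)" by (rule mult_nonneg_nonneg) (use True gp in auto)
            hence "- c * g (U x) * (W x * W x) \<le> 0" by simp
            thus "\<exists>y. (E has_real_derivative y) (at x) \<and> y \<le> 0" using Eder by blast
          qed
          have "F 1 \<le> E u"
            by (rule tendsto_upperbound[OF Etop])
               (auto simp: eventually_at_top_linorder intro!: exI[of _ u] mono)
          hence FF: "F 1 \<le> F (U u)" using Ele[of u] by linarith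
          show "U u = 1"
          proof (rule ccontr)
            assume "U u \<noteq> 1"
            hence "F (U u) < F 1" using F1 H ut by blast
            thus False using FF by linarith
          qed
        qed
      qed
    next
      case False
      hence cneg: "c < 0" using cne by simp
      have "eventually (\<lambda>x. dist (U x) 1 < 1/2) at_top" using tendstoD[OF U1, of "1/2"] by simp
      then obtain N where N: "\<forall>x\<ge>N. \<bar>U x - 1\<bar> < 1/2"
        by (auto simp: eventually_at_top_linorder dist_real_def)
      have "\<bar>U N - 1\<bar> < 1/2" using N by simp
      hence far: "\<bar>U N - 0\<bar> \<ge> \<delta>" using \<delta>le by arith
      show False
      proof (rule tail_bot[OF Uc \<delta>pos U0 far])
        fix t assume H: "\<forall>u\<le>t. \<bar>U u - 0\<bar> < \<delta>"
        show "\<forall>u\<le>t. U u = 0"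
        proof (intro allI impI)
          fix u assume ut: "u \<le> t"
          have mono: "E v \<le> E u" if vu: "v \<le> u" for v
          proof (rule DERIV_nonneg_imp_nondecreasing[OF vu])
            fix x assume "v \<le> x" "x \<le> u"
            hence "\<bar>U x - 0\<bar> < \<delta>" using H ut by simp
            hence "\<bar>U x - 0\<bar> < \<delta>0" using \<delta>le by linarith
            hence gp: "g (U x) > 0" by (rule \<delta>0(2))
            have "0 \<le> (- c) * g (U x) * (W x * W x)" by (rule mult_nonneg_nonneg) (use cneg gp in \<open>auto intro: mult_nonpos_nonneg\<close>)
            hence "- c * g (U x) * (W x * W x) \<ge> 0" by simp
            thus "\<exists>y. (E has_real_derivative y) (at x) \<and> y \<ge> 0" using Eder by blast
          qed
          have "F 0 \<le> E u"
            by (rule tendsto_upperbound[OF Ebot])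
               (auto simp: eventually_at_bot_linorder intro!: exI[of _ u] mono)
          hence FF: "F 0 \<le> F (U u)" using Ele[of u] by linarith
          show "U u = 0"
          proof (rule ccontr)
            assume "U u \<noteq> 0"
            moreover have "\<bar>U u\<bar> < \<delta>" using H ut by simp
            ultimately have "F (U u) < F 0" using F0 by blast
            thus False using FF by linarith
          qed
        qed
      qed
    qed
  qed
  have Dn: "Dc \<noteq> 0" using Dpos by simp
  have Uge: "U x \<ge> 0" for x
  proof (rule ccontr)
    assume "\<not> U x \<ge> 0" hence neg: "U x < 0" by simp
    obtain m where m: "\<forall>y. U m \<le> U y" using attains_min[OF Uc U0 U1, of x] neg by auto
    have Um: "U m < 0" using m neg by (meson le_less_trans)
    have W0: "W m = 0" by (rule DERIV_local_min[OF Uder zero_less_one]) (use m in auto)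
    have "f (U m) > 0" using fpos Um by auto
    hence "(- f (U m) - c * g (U m) * W m) / Dc < 0" using W0 Dpos by (simp add: divide_neg_pos)
    from DERIV_neg_dec_right[OF Wder[OF Dn] this] obtain d where
      d: "d > 0" "\<forall>h>0. h < d \<longrightarrow> W m > W (m + h)" by blast
    have "\<exists>z. m < z \<and> z < m + d/2 \<and> U (m + d/2) - U m = (m + d/2 - m) * W z"
      by (rule MVT2) (use d Uder in auto)
    then obtain z where z: "m < z" "z < m + d/2" "U (m + d/2) - U m = (m + d/2 - m) * W z" by blast
    have "W (m + (z - m)) < W m" using d(2)[rule_format, of "z - m"] z d(1) by linarith
    hence "W z < 0" using W0 by simp
    hence "(m + d/2 - m) * W z < 0" using d(1) by (simp add: mult_pos_neg)
    hence "U (m + d/2) - U m < 0" using z(3) by linarith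
    thus False using m[rule_format, of "m + d/2"] by linarith
  qed
  have Ule: "U x \<le> 1" for x
  proof (rule ccontr)
    assume "\<not> U x \<le> 1" hence big: "U x > 1" by simp
    have l0: "((\<lambda>y. - U y) \<longlongrightarrow> - 0) at_bot" by (rule tendsto_minus[OF U0])
    have l1: "((\<lambda>y. - U y) \<longlongrightarrow> - 1) at_top" by (rule tendsto_minus[OF U1])
    have cm: "isCont (\<lambda>y. - U y) y" for y using Uc[of y] by (rule isCont_minus)
    have "\<exists>M. \<forall>y. - U M \<le> - U y"
      by (rule attains_min[OF cm l0 l1, of x]) (use big in auto)
    then obtain M where M: "\<forall>y. U y \<le> U M" by auto
    have UM: "U M > 1" using M big by (meson less_le_trans)
    have W0: "W M = 0" by (rule DERIV_local_max[OF Uder zero_less_one]) (use M in auto)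
    have "f (U M) < 0" using fneg UM by auto
    hence "(- f (U M) - c * g (U M) * W M) / Dc > 0" using W0 Dpos by (simp add: divide_neg_pos)
    from DERIV_pos_inc_right[OF Wder[OF Dn] this] obtain d where
      d: "d > 0" "\<forall>h>0. h < d \<longrightarrow> W M < W (M + h)" by blast
    have "\<exists>z. M < z \<and> z < M + d/2 \<and> U (M + d/2) - U M = (M + d/2 - M) * W z"
      by (rule MVT2) (use d Uder in auto)
    then obtain z where z: "M < z" "z < M + d/2" "U (M + d/2) - U M = (M + d/2 - M) * W z" by blast
    have "W M < W (M + (z - M))" using d(2)[rule_format, of "z - M"] z d(1) by linarith
    hence "W z > 0" using W0 by simp
    hence "(M + d/2 - M) * W z > 0" using d(1) by simp
    hence "U (M + d/2) - U M > 0" using z(3) by linarith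
    thus False using M[rule_format, of "M + d/2"] by linarith
  qed
  have gU: "g (U x) > 0" for x using gpos Uge Ule by blast
  have Eanti: "E y \<le> E x" if "c \<ge> 0" "x \<le> y" for x y
  proof (rule DERIV_nonpos_imp_nonincreasing[OF that(2)])
    fix z :: real
    have "0 \<le> c * g (U z) * (W z * W z)" by (rule mult_nonneg_nonneg) (use that gU[of z] in auto)
    hence "- c * g (U z) * (W z * W z) \<le> 0" by simp
    thus "\<exists>y. (E has_real_derivative y) (at z) \<and> y \<le> 0" using Eder by blast
  qed
  have Emono: "E x \<le> E y" if "c \<le> 0" "x \<le> y" for x y
  proof (rule DERIV_nonneg_imp_nondecreasing[OF that(2)])
    fix z :: real
    have "0 \<le> (- c) * g (U z) * (W z * W z)" by (rule mult_nonneg_nonneg) (use that gU[of z] in \<open>auto intro: mult_nonpos_nonneg\<close>)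
    hence "- c * g (U z) * (W z * W z) \<ge> 0" by simp
    thus "\<exists>y. (E has_real_derivative y) (at z) \<and> y \<ge> 0" using Eder by blast
  qed
  have bnd1: "F 1 \<le> E x \<and> E x \<le> F 0" if "c \<ge> 0" for x
  proof
    show "F 1 \<le> E x"
      by (rule tendsto_upperbound[OF Etop])
         (use Eanti[OF that] in \<open>auto simp: eventually_at_top_linorder\<close>)
    show "E x \<le> F 0"
      by (rule tendsto_lowerbound[OF Ebot])
         (use Eanti[OF that] in \<open>auto simp: eventually_at_bot_linorder\<close>)
  qed
  have bnd2: "F 0 \<le> E x \<and> E x \<le> F 1" if "c \<le> 0" for x
  proof
    show "E x \<le> F 1"
      by (rule tendsto_lowerbound[OF Etop])
         (use Emono[OF that] in \<open>auto simp: eventually_at_top_linorder\<close>)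
    show "F 0 \<le> E x"
      by (rule tendsto_upperbound[OF Ebot])
         (use Emono[OF that] in \<open>auto simp: eventually_at_bot_linorder\<close>)
  qed
  have strict: "F 0 \<noteq> F 1" if cne: "c \<noteq> 0"
  proof
    assume eq: "F 0 = F 1"
    have Ec: "E x = F 0" for x
    proof (cases "c \<ge> 0")
      case True thus ?thesis using bnd1[OF True, of x] eq by linarith
    next
      case False hence cl: "c \<le> 0" by simp
      show ?thesis using bnd2[OF cl, of x] eq by linarith
    qed
    hence Eeq: "E = (\<lambda>_. F 0)" by (intro ext)
    have W0: "W x = 0" for x
    proof -
      have "((\<lambda>_. F 0) has_real_derivative 0) (at x)" by (rule DERIV_const)
      hence d0: "(E has_real_derivative 0) (at x)" using Eeq by simp
      have "- c * g (U x) * (W x * W x) = 0" by (rule DERIV_unique[OF Eder d0])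
      hence "W x * W x = 0" using cne gU[of x] by simp
      thus ?thesis by simp
    qed
    have U0d: "(U has_real_derivative 0) (at y)" for y using Uder[of y] by (simp add: W0)
    have "U x = U 0" for x by (rule DERIV_isconst_all) (use U0d in blast)
    hence "\<exists>k. U = (\<lambda>_. k)" by (intro exI[of _ "U 0"] ext)
    then obtain k where Ueq: "U = (\<lambda>_. k)" by blast
    have "k = 1" using U1 unfolding Ueq by (simp add: tendsto_const_iff)
    moreover have "k = 0" using U0 unfolding Ueq by (simp add: tendsto_const_iff)
    ultimately show False by simp
  qed
  have "sgn c = sgn (- integral {0..1} f)"
  proof (cases "c > 0")
    case True
    have "F 1 \<le> F 0" using bnd1[OF less_imp_le[OF True], of 0] by linarith
    moreover have "F 0 \<noteq> F 1" using strict True by simp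
    ultimately have "F 1 < F 0" by linarith
    thus ?thesis using True unfolding intF by simp
  next
    case False
    show ?thesis
    proof (cases "c = 0")
      case True
      hence "F 1 = F 0" using bnd1[of 0] bnd2[of 0] by simp
      thus ?thesis using True unfolding intF by simp
    next
      case False
      hence cn: "c < 0" using \<open>\<not> c > 0\<close> by simp
      have "F 0 \<le> F 1" using bnd2[OF less_imp_le[OF cn], of 0] by linarith
      moreover have "F 0 \<noteq> F 1" using strict cn by simp
      ultimately have "F 0 < F 1" by linarith
      thus ?thesis using cn unfolding intF by simp
    qed
  qed
  moreover have "c\<^sup>2 * \<tau> < 1" using Dpos unfolding Dc_def by simp
  ultimately show ?thesis by simp
qed

end
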